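(* Let $f:\mathbb{R}^n\to\mathbb{R}$ satisfy: (A1) $f\in C^\infty(\mathbb{R}^n)$; (A2) there is $M>0$ with $f(x)>0$ for all $x\notin B(0,M)$; (A3) $\nabla f(p)\neq0$ for all $p\in\mathcal{B}:=\{p:f(p)=0\}$, with $\mathcal{B}\neq\emptyset$. Let $d(x)=\min_{q\in\mathcal{B}}\|x-q\|$ and $\Omega_\sigma=\{x:d(x)<\sigma\}$. Let $\beta\in(0,1)$ and let $\sigma_2>0$ be such that for all $p\in\mathcal{B}$ and all $0<r<\sigma_2$ one has $\mathcal{B}\cap B(p,r)\subseteq\Gamma_r(p)$, where $\Gamma_r(p)=\{p+v: |v^T\nabla f(p)|<\beta r\|\nabla f(p)\|\}$. Let $x\in\Omega_{\sigma_2}$, let $p\in\mathcal{B}$ with $d(x)=\|x-p\|$, and let $r=d(x)$. Then the hyperplane \[R=\{p+v:\ v\in\mathbb{R}^n,\ v^T\nabla f(p)=-\mathrm{sgn}(f(x))\,\beta r\|\nabla f(p)\|\}\] satisfies $\mathrm{sgn}(f(y))=-\mathrm{sgn}(f(x))$ for all $y\in R\cap B(p,r)$.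
   Context: $\|\cdot\|$ is the Euclidean norm, $B(p,r)$ the open Euclidean ball, $\mathrm{sgn}$ the sign function. Such a $\sigma_2>0$ exists for every $\beta\in(0,1)$ under (A1)–(A3). *)

theory Defs
  imports "HOL-Analysis.Analysis"
begin

definition grad :: "('a::euclidean_space \<Rightarrow> real) \<Rightarrow> 'a \<Rightarrow> 'a" where
  "grad f p = (\<Sum>i\<in>Basis. frechet_derivative f (at p) i *\<^sub>R i)"

fun Ck :: "nat \<Rightarrow> ('a::euclidean_space \<Rightarrow> real) \<Rightarrow> bool" where
  "Ck 0 f = continuous_on UNIV f"
| "Ck (Suc k) f = ((\<forall>x. f differentiable (at x)) \<and>
      (\<forall>i\<in>Basis. Ck k (\<lambda>x. frechet_derivative f (at x) i)))"

definition smooth :: "('a::euclidean_space \<Rightarrow> real) \<Rightarrow> bool" where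
  "smooth f = (\<forall>k. Ck k f)"

end

theory Submission
  imports Defs
begin

lemma grad_inner:
  fixes f :: "'a::euclidean_space \<Rightarrow> real"
  assumes "f differentiable (at p)"
  shows "v \<bullet> grad f p = frechet_derivative f (at p) v"
proof -
  let ?F = "frechet_derivative f (at p)"
  have lin: "linear ?F"
    using assms frechet_derivative_works has_derivative_linear by blast
  have "?F v = ?F (\<Sum>i\<in>Basis. (v \<bullet> i) *\<^sub>R i)" by (simp add: euclidean_representation)
  also have "\<dots> = (\<Sum>i\<in>Basis. (v \<bullet> i) * ?F i)"
    using lin by (simp add: linear_sum linear_scale)
  also have "\<dots> = v \<bullet> grad f p"
    unfolding grad_def by (simp add: inner_sum_right mult.commute)
  finally show ?thesis by simp
qed

lemma dir_neg:
  fixes f :: "'a::euclidean_space \<Rightarrow> real"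
  assumes "f differentiable (at p)" "f p = 0" "frechet_derivative f (at p) w < 0"
  shows "\<exists>d>0. \<forall>t. 0 < t \<and> t < d \<longrightarrow> f (p + t *\<^sub>R w) < 0"
proof -
  let ?F = "frechet_derivative f (at p)"
  have d0: "(f has_derivative ?F) (at p)"
    using assms(1) frechet_derivative_works by blast
  have d: "(f has_derivative ?F) (at (p + 0 *\<^sub>R w))"
    using d0 by simp
  have lin: "linear ?F"
    using assms frechet_derivative_works has_derivative_linear by blast
  have l: "((\<lambda>t::real. p + t *\<^sub>R w) has_derivative (\<lambda>t. t *\<^sub>R w)) (at 0)"
    by (auto intro!: derivative_eq_intros)
  have "((f \<circ> (\<lambda>t::real. p + t *\<^sub>R w)) has_derivative (?F \<circ> (\<lambda>t. t *\<^sub>R w))) (at 0)"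
    by (rule diff_chain_at[OF l d])
  moreover have "?F \<circ> (\<lambda>t. t *\<^sub>R w) = (*) (?F w)"
    using lin by (auto simp: linear_scale)
  ultimately have "((\<lambda>t. f (p + t *\<^sub>R w)) has_real_derivative ?F w) (at 0)"
    by (simp add: has_field_derivative_def o_def)
  from DERIV_neg_dec_right[OF this assms(3)] show ?thesis
    using assms(2) by auto
qed

theorem corollary1:
  fixes f :: "'a::euclidean_space \<Rightarrow> real"
    and M \<beta> \<sigma>\<^sub>2 :: real and x p :: 'a
  assumes A1: "smooth f"
    and A2: "M > 0" "\<forall>z. z \<notin> ball 0 M \<longrightarrow> f z > 0"
    and A3: "\<forall>q. f q = 0 \<longrightarrow> grad f q \<noteq> 0" "{q. f q = 0} \<noteq> {}"
    and beta: "0 < \<beta>" "\<beta> < 1"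
    and sigma: "\<sigma>\<^sub>2 > 0"
    and cone: "\<forall>q\<in>{q. f q = 0}. \<forall>r. 0 < r \<and> r < \<sigma>\<^sub>2 \<longrightarrow>
        {q'. f q' = 0} \<inter> ball q r \<subseteq>
          {q + v | v. \<bar>v \<bullet> grad f q\<bar> < \<beta> * r * norm (grad f q)}"
    and x: "infdist x {q. f q = 0} < \<sigma>\<^sub>2"
    and p: "f p = 0" "infdist x {q. f q = 0} = norm (x - p)"
  shows "\<forall>y \<in> {p + v | v. v \<bullet> grad f p =
                 - sgn (f x) * \<beta> * infdist x {q. f q = 0} * norm (grad f p)}
             \<inter> ball p (infdist x {q. f q = 0}).
           sgn (f y) = - sgn (f x)"
proof (intro ballI)
  fix y assume yR: "y \<in> {p + v | v. v \<bullet> grad f p =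
                 - sgn (f x) * \<beta> * infdist x {q. f q = 0} * norm (grad f p)}
             \<inter> ball p (infdist x {q. f q = 0})"
  define r where "r = infdist x {q. f q = 0}"
  define g where "g = grad f p"
  define s where "s = sgn (f x)"
  obtain v where yv: "y = p + v" and vg: "v \<bullet> g = - s * \<beta> * r * norm g" and vn: "norm v < r"
    using yR unfolding r_def g_def s_def by (auto simp: dist_norm)
  have rpos: "r > 0" using vn norm_ge_zero[of v] by linarith
  have fx: "f x \<noteq> 0"
  proof
    assume "f x = 0" then have "r = 0" unfolding r_def by simp
    with rpos show False by simp
  qed
  have s2: "s * s = 1" and sabs: "s = 1 \<or> s = -1" using fx unfolding s_def
    by (auto simp: sgn_if)
  have gnz: "g \<noteq> 0" using A3(1) p(1) unfolding g_def by blast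
  have gpos: "norm g > 0" using gnz by simp
  have C1: "Ck 1 f" using A1 unfolding smooth_def by blast
  have diff: "\<And>z. f differentiable (at z)" using C1 by simp
  have cont: "continuous_on UNIV f"
    using diff by (simp add: differentiable_imp_continuous_on differentiable_on_def differentiable_at_withinI)
  have rs: "r < \<sigma>\<^sub>2" using x unfolding r_def .
  define V where "V = {u. norm u < r \<and> s * (u \<bullet> g) + \<beta> * norm u * norm g < 0}"
  have nz: "f (p + u) \<noteq> 0" if uV: "u \<in> V" for u
  proof
    assume fz: "f (p + u) = 0"
    have un: "norm u < r" and ug: "s * (u \<bullet> g) + \<beta> * norm u * norm g < 0" using uV unfolding V_def by auto
    have abs_ug: "\<bar>u \<bullet> g\<bar> = - (s * (u \<bullet> g))" proof -
      have "\<beta> * norm u * norm g \<ge> 0" using beta(1) by simp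
      then show ?thesis using sabs ug by (cases "s = 1") auto
    qed
    define m where "m = min r (\<bar>u \<bullet> g\<bar> / (\<beta> * norm g))"
    have bg: "\<beta> * norm g > 0" using beta gpos by simp
    have "norm u * (\<beta> * norm g) < \<bar>u \<bullet> g\<bar>" using ug abs_ug by (simp add: algebra_simps)
    then have "norm u < \<bar>u \<bullet> g\<bar> / (\<beta> * norm g)" using bg by (simp add: field_simps)
    then have um: "norm u < m" unfolding m_def using un by simp
    define r' where "r' = (norm u + m) / 2"
    have r'1: "norm u < r'" "r' < m" using um unfolding r'_def by auto
    have r'pos: "0 < r'" using r'1 norm_ge_zero[of u] by linarith
    have r'2: "r' < \<sigma>\<^sub>2" using r'1 rs unfolding m_def by simp
    have "p + u \<in> {q'. f q' = 0} \<inter> ball p r'" using fz r'1 by (simp add: dist_norm)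
    then have "p + u \<in> {p + v | v. \<bar>v \<bullet> g\<bar> < \<beta> * r' * norm g}"
      using cone p(1) r'pos r'2 unfolding g_def by blast
    then have "\<bar>u \<bullet> g\<bar> < \<beta> * r' * norm g" by auto
    moreover have "\<beta> * r' * norm g \<le> \<bar>u \<bullet> g\<bar>"
    proof -
      have "r' \<le> \<bar>u \<bullet> g\<bar> / (\<beta> * norm g)" using r'1 unfolding m_def by simp
      then have "r' * (\<beta> * norm g) \<le> \<bar>u \<bullet> g\<bar>" using bg by (simp add: field_simps)
      then show ?thesis by (simp add: algebra_simps)
    qed
    ultimately show False by simp
  qed
  have convV: "convex V"
    unfolding convex_def
  proof (intro ballI allI impI)
    fix a b and u w :: real assume uV: "a \<in> V" and wV: "b \<in> V" and u0: "0 \<le> u" and w0: "0 \<le> w" and uw: "u + w = 1"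
    have n: "norm (u *\<^sub>R a + w *\<^sub>R b) \<le> u * norm a + w * norm b"
      using norm_triangle_ineq[of "u *\<^sub>R a" "w *\<^sub>R b"] u0 w0 by simp
    have a1: "norm a < r" "s * (a \<bullet> g) + \<beta> * norm a * norm g < 0" using uV unfolding V_def by auto
    have b1: "norm b < r" "s * (b \<bullet> g) + \<beta> * norm b * norm g < 0" using wV unfolding V_def by auto
    have "u * norm a + w * norm b < r"
    proof (cases "u = 0")
      case True then show ?thesis using uw b1 by simp
    next
      case False
      then have "u * norm a < u * r" using u0 a1 by simp
      moreover have "w * norm b \<le> w * r" using w0 b1 by (simp add: mult_left_mono)
      moreover have "u * r + w * r = r" using uw by (metis distrib_right mult_1)
      ultimately show ?thesis by linarith
    qed
    moreover
    have "s * ((u *\<^sub>R a + w *\<^sub>R b) \<bullet> g) + \<beta> * norm (u *\<^sub>R a + w *\<^sub>R b) * norm g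
        \<le> u * (s * (a \<bullet> g) + \<beta> * norm a * norm g) + w * (s * (b \<bullet> g) + \<beta> * norm b * norm g)"
    proof -
      have "\<beta> * norm g * norm (u *\<^sub>R a + w *\<^sub>R b) \<le> \<beta> * norm g * (u * norm a + w * norm b)"
        using n beta gpos by (simp add: mult_left_mono)
      then show ?thesis by (simp add: inner_add_left algebra_simps)
    qed
    moreover have "u * (s * (a \<bullet> g) + \<beta> * norm a * norm g) + w * (s * (b \<bullet> g) + \<beta> * norm b * norm g) < 0"
    proof (cases "u = 0")
      case True then show ?thesis using uw b1 by simp
    next
      case False
      then have "u * (s * (a \<bullet> g) + \<beta> * norm a * norm g) < 0" using u0 a1 by (simp add: mult_pos_neg)
      moreover have "w * (s * (b \<bullet> g) + \<beta> * norm b * norm g) \<le> 0" using w0 b1 by (simp add: mult_nonneg_nonpos)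
      ultimately show ?thesis by simp
    qed
    ultimately show "u *\<^sub>R a + w *\<^sub>R b \<in> V" unfolding V_def using n by auto
  qed
  have vV: "v \<in> V"
  proof -
    have "s * (v \<bullet> g) = - \<beta> * r * norm g" using vg s2 by (simp add: algebra_simps)
    moreover have "\<beta> * norm v * norm g < \<beta> * r * norm g" using vn beta gpos by simp
    ultimately show ?thesis unfolding V_def using vn by simp
  qed
  define w where "w = - s *\<^sub>R g"
  have Fw: "frechet_derivative (\<lambda>z. s * f z) (at p) w < 0"
  proof -
    have "frechet_derivative f (at p) w = w \<bullet> g" using grad_inner[OF diff] unfolding g_def by simp
    have "(f has_derivative frechet_derivative f (at p)) (at p)" using diff frechet_derivative_works by blast
    then have "((\<lambda>z. s * f z) has_derivative (\<lambda>h. s * frechet_derivative f (at p) h)) (at p)"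
      by (auto intro!: derivative_eq_intros)
    then have "frechet_derivative (\<lambda>z. s * f z) (at p) = (\<lambda>h. s * frechet_derivative f (at p) h)"
      by (metis frechet_derivative_at)
    then have "frechet_derivative (\<lambda>z. s * f z) (at p) w = s * (w \<bullet> g)"
      using grad_inner[OF diff] unfolding g_def by simp
    also have "\<dots> = - (s * s) * (g \<bullet> g)" unfolding w_def by (simp add: algebra_simps)
    also have "\<dots> < 0" using s2 gnz by simp
    finally show ?thesis .
  qed
  have sdiff: "(\<lambda>z. s * f z) differentiable (at p)" using diff by (auto intro!: derivative_intros)
  obtain d where d: "d > 0" and dneg: "\<And>t. 0 < t \<Longrightarrow> t < d \<Longrightarrow> s * f (p + t *\<^sub>R w) < 0"
    using dir_neg[OF sdiff _ Fw] p(1) by auto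
  define t where "t = min (d/2) (r / (2 * norm g))"
  have tpos: "t > 0" using d rpos gpos unfolding t_def by simp
  have "t < d" using d unfolding t_def by linarith
  then have fneg: "s * f (p + t *\<^sub>R w) < 0" using dneg tpos by simp
  have twV: "t *\<^sub>R w \<in> V"
  proof -
    have nw: "norm w = norm g" unfolding w_def using sabs by auto
    have "t \<le> r / (2 * norm g)" unfolding t_def by simp
    then have "t * norm g \<le> r / 2" using gpos by (simp add: field_simps)
    then have n1: "norm (t *\<^sub>R w) < r" using nw tpos rpos by simp
    have "s * (t *\<^sub>R w \<bullet> g) = - t * (norm g * norm g)" unfolding w_def using s2
      by (simp add: algebra_simps power2_norm_eq_inner[symmetric] power2_eq_square)
    moreover have "\<beta> * norm (t *\<^sub>R w) * norm g = \<beta> * t * (norm g * norm g)" using nw tpos by simp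
    moreover have "\<beta> * t * (norm g * norm g) < t * (norm g * norm g)" using beta tpos gpos by simp
    ultimately show ?thesis unfolding V_def using n1 by (simp only: mem_Collect_eq mult_minus_left simp_thms)
  qed
  have conn: "connected ((\<lambda>u. s * f (p + u)) ` V)"
    apply (rule connected_continuous_image)
     apply (rule continuous_on_subset[of UNIV])
      apply (auto intro!: continuous_intros continuous_on_compose2[OF cont] simp: convV convex_connected)
    done
  have "s * f (p + v) < 0"
  proof (rule ccontr)
    assume "\<not> s * f (p + v) < 0"
    then have "0 \<le> s * f (p + v)" by simp
    from connectedD_interval[OF conn, of "s * f (p + t *\<^sub>R w)" "s * f (p + v)" 0] this fneg vV twV
    have "0 \<in> (\<lambda>u. s * f (p + u)) ` V" by auto
    then obtain u where "u \<in> V" "s * f (p + u) = 0" by auto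
    then show False using nz s2 by auto
  qed
  then show "sgn (f y) = - sgn (f x)" using sabs yv unfolding s_def[symmetric]
    by (auto simp: sgn_if mult_less_0_iff)
qed

end
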